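(* Fix $P_1,P_2,Q,N_3>0$. Let $R^{\rm up}_G(N_2)$ denote the upper bound of Theorem 3 and $R^{\rm lo}_G(N_2)$ the lower bound of Theorem 4, i.e. $R^{\rm up}_G=\max_{\rho_{12},\varrho_{1s}}\min\{\tfrac12\log(1+P_1(1-\rho_{12}^2)(\tfrac1{N_2}+\tfrac1{N_3})),\ \tfrac12\log(1+\frac{(\sqrt{P_2}+\rho_{12}\sqrt{P_1})^2}{P_1(1-\rho_{12}^2-\varrho_{1s}^2)+(\sqrt{\Delta_Q}+\varrho_{1s}\sqrt{P_1})^2+N_3})+\tfrac12\log(1+\frac{P_1(1-\rho_{12}^2-\varrho_{1s}^2)}{N_3})\}$ with $\Delta_Q=QN_2/((\sqrt Q+\sqrt{P_1})^2+N_2)$, maximized over $\rho_{12}\in[0,1]$, $\varrho_{1s}\in[-1,0]$, $\rho_{12}^2+\varrho_{1s}^2\le1$; and $R^{\rm lo}_G=\max_{\gamma\in[0,1]}\frac12\log(1+\frac{(\sqrt{(1-\gamma)P_1}+\sqrt{P_2-D})^2}{N_3+D+\gamma P_1})$ with $D=P_2N_2/(N_2+\gamma P_1)$. Then as $N_2\to0$ both $R^{\rm up}_G(N_2)$ and $R^{\rm lo}_G(N_2)$ converge to $\frac12\log\Big(1+\frac{(\sqrt{P_1}+\sqrt{P_2})^2}{N_3}\Big)$; consequently the capacity of the Gaussian state-dependent relay channel with informed source equals $\frac12\log\big(1+\frac{(\sqrt{P_1}+\sqrt{P_2})^2}{N_3}\big)-o(1)$ with $o(1)\to0$ as $N_2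\to0$.
   Context: Gaussian state-dependent relay channel with informed source: $Y_{2,i}=X_{1,i}+S_i+Z_{2,i}$, $Y_{3,i}=X_{1,i}+X_{2,i}+S_i+Z_{3,i}$ with $S_i\sim\mathcal N(0,Q)$, $Z_{2,i}\sim\mathcal N(0,N_2)$, $Z_{3,i}\sim\mathcal N(0,N_3)$ i.i.d. and mutually independent; the state sequence is known non-causally only at the source; source encoder $X_1^n=\phi_1^n(W,S^n)$, relay encoders $X_{2,i}=\phi_{2,i}(Y_2^{i-1})$, decoder from $Y_3^n$; power constraints $\sum_iX_{1,i}^2\le nP_1$, $\sum_iX_{2,i}^2\le nP_2$; capacity is the supremum of rates with vanishing average error probability. Logarithms base 2. *)

theory Defs
  imports "HOL-Analysis.Analysis"
begin

definition DeltaQ :: "real \<Rightarrow> real \<Rightarrow> real \<Rightarrow> real" where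
  "DeltaQ P1 Q N2 = Q * N2 / ((sqrt Q + sqrt P1)^2 + N2)"

definition Rup_obj :: "real \<Rightarrow> real \<Rightarrow> real \<Rightarrow> real \<Rightarrow> real \<Rightarrow> real \<Rightarrow> real \<Rightarrow> real" where
  "Rup_obj P1 P2 Q N2 N3 r v =
     min ((1/2) * log 2 (1 + P1 * (1 - r^2) * (1/N2 + 1/N3)))
         ((1/2) * log 2 (1 + (sqrt P2 + r * sqrt P1)^2 /
              (P1 * (1 - r^2 - v^2) + (sqrt (DeltaQ P1 Q N2) + v * sqrt P1)^2 + N3))
          + (1/2) * log 2 (1 + P1 * (1 - r^2 - v^2) / N3))"

definition Rup_dom :: "(real \<times> real) set" where
  "Rup_dom = {(r, v). 0 \<le> r \<and> r \<le> 1 \<and> -1 \<le> v \<and> v \<le> 0 \<and> r^2 + v^2 \<le> 1}"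

text \<open>Upper bound R^up_G(N2) of Theorem 3 (maximum over a compact set, written as a supremum).\<close>
definition RupG :: "real \<Rightarrow> real \<Rightarrow> real \<Rightarrow> real \<Rightarrow> real \<Rightarrow> real" where
  "RupG P1 P2 Q N3 N2 = (SUP rv\<in>Rup_dom. Rup_obj P1 P2 Q N2 N3 (fst rv) (snd rv))"

definition Dlo :: "real \<Rightarrow> real \<Rightarrow> real \<Rightarrow> real \<Rightarrow> real" where
  "Dlo P1 P2 N2 \<gamma> = P2 * N2 / (N2 + \<gamma> * P1)"

definition Rlo_obj :: "real \<Rightarrow> real \<Rightarrow> real \<Rightarrow> real \<Rightarrow> real \<Rightarrow> real" where
  "Rlo_obj P1 P2 N2 N3 \<gamma> =
     (1/2) * log 2 (1 + (sqrt ((1 - \<gamma>) * P1) + sqrt (P2 - Dlo P1 P2 N2 \<gamma>))^2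
                     / (N3 + Dlo P1 P2 N2 \<gamma> + \<gamma> * P1))"

definition RloG :: "real \<Rightarrow> real \<Rightarrow> real \<Rightarrow> real \<Rightarrow> real" where
  "RloG P1 P2 N3 N2 = (SUP \<gamma>\<in>{0..1}. Rlo_obj P1 P2 N2 N3 \<gamma>)"

end

theory Submission
  imports Defs
begin


lemma lo_le:
  fixes P1 P2 N3 N2 g :: real
  assumes "P1 > 0" "P2 > 0" "N3 > 0" "N2 > 0" "0 \<le> g" "g \<le> 1"
  shows "Rlo_obj P1 P2 N2 N3 g \<le> (1/2) * log 2 (1 + (sqrt P1 + sqrt P2)^2 / N3)"
proof -
  define D where "D = Dlo P1 P2 N2 g"
  have den: "N2 + g * P1 \<ge> N2" using assms by simp
  have D0: "0 \<le> D" using assms unfolding D_def Dlo_def by simp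
  have D1: "D \<le> P2" unfolding D_def Dlo_def using assms den
    by (simp add: divide_le_eq mult_left_mono)
  have a: "sqrt ((1 - g) * P1) \<le> sqrt P1" using assms by (simp add: mult_le_cancel_right1)
  have b: "sqrt (P2 - D) \<le> sqrt P2" using D0 by simp
  have num: "(sqrt ((1 - g) * P1) + sqrt (P2 - D))^2 \<le> (sqrt P1 + sqrt P2)^2"
    by (rule power_mono) (use add_mono[OF a b] D1 assms in auto)
  have dd: "N3 \<le> N3 + D + g * P1" using D0 assms by simp
  have fr: "(sqrt ((1 - g) * P1) + sqrt (P2 - D))^2 / (N3 + D + g * P1) \<le> (sqrt P1 + sqrt P2)^2 / N3"
    by (rule frac_le) (use num dd assms in auto)
  have "log 2 (1 + (sqrt ((1 - g) * P1) + sqrt (P2 - D))^2 / (N3 + D + g * P1))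
     \<le> log 2 (1 + (sqrt P1 + sqrt P2)^2 / N3)"
    by (rule log_mono) (use fr D0 assms in \<open>auto intro!: add_pos_nonneg divide_nonneg_pos\<close>)
  then show ?thesis unfolding Rlo_obj_def D_def by simp
qed

lemma lo_lim:
  fixes P1 P2 N3 :: real
  assumes "P1 > 0" "P2 > 0" "N3 > 0"
  shows "((\<lambda>N2. RloG P1 P2 N3 N2) \<longlongrightarrow> (1/2) * log 2 (1 + (sqrt P1 + sqrt P2)^2 / N3)) (at_right 0)"
proof (rule order_tendstoI)
  let ?L = "(1/2) * log 2 (1 + (sqrt P1 + sqrt P2)^2 / N3)"
  have le: "RloG P1 P2 N3 N2 \<le> ?L" if "N2 > 0" for N2
    unfolding RloG_def by (rule cSUP_least) (use lo_le assms that in auto)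
  fix a assume aL: "a > ?L"
  show "eventually (\<lambda>N2. RloG P1 P2 N3 N2 < a) (at_right 0)"
    by (rule eventually_mono[OF eventually_at_right_less]) (use le aL in force)
next
  let ?L = "(1/2) * log 2 (1 + (sqrt P1 + sqrt P2)^2 / N3)"
  fix a assume a: "a < ?L"
  define g where "g = (\<lambda>x. Rlo_obj P1 P2 0 N3 x)"
  have gform: "g x = (1/2) * log 2 (1 + (sqrt ((1 - x) * P1) + sqrt P2)^2 / (N3 + x * P1))" for x
    unfolding g_def Rlo_obj_def Dlo_def by simp
  have pos: "0 < 1 + (sqrt P1 + sqrt P2)^2 / N3" using assms by (simp add: add_pos_nonneg)
  have "(g \<longlongrightarrow> g 0) (at_right 0)"
    unfolding gform using assms pos
    by (intro tendsto_intros) (auto intro!: add_pos_nonneg)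
  moreover have "g 0 = ?L" unfolding gform by simp
  ultimately have "eventually (\<lambda>x. a < g x) (at_right 0)" using a order_tendstoD(1) by metis
  then obtain b where b: "b > 0" "\<And>y. y > 0 \<Longrightarrow> y < b \<Longrightarrow> a < g y"
    by (auto simp: eventually_at_right_field)
  define c where "c = min (b/2) 1"
  have c: "0 < c" "c \<le> 1" "a < g c" using b unfolding c_def by auto
  have p1: "0 < N3 + c * P1" using assms c by (simp add: add_pos_nonneg)
  have p2: "0 < 1 + (sqrt ((1 - c) * P1) + sqrt P2)\<^sup>2 / (N3 + c * P1)"
      using p1 by (simp add: add_pos_nonneg)
  have "((\<lambda>N2. Rlo_obj P1 P2 N2 N3 c) \<longlongrightarrow> Rlo_obj P1 P2 0 N3 c) (at_right 0)"
    unfolding Rlo_obj_def Dlo_def using assms c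
    using p1 p2 by (intro tendsto_intros) auto
  then have ev: "eventually (\<lambda>N2. a < Rlo_obj P1 P2 N2 N3 c) (at_right 0)"
    using c(3) unfolding g_def by (simp add: order_tendstoD(1))
  show "eventually (\<lambda>N2. a < RloG P1 P2 N3 N2) (at_right 0)"
    using ev eventually_at_right_less[of 0]
  proof eventually_elim
    case (elim N2)
    have "Rlo_obj P1 P2 N2 N3 c \<le> RloG P1 P2 N3 N2"
      unfolding RloG_def
    proof (rule cSUP_upper)
      show "c \<in> {0..1}" using c by simp
      show "bdd_above ((\<lambda>x. Rlo_obj P1 P2 N2 N3 x) ` {0..1})"
        by (rule bdd_aboveI2[where M = ?L]) (use lo_le assms elim in auto)
    qed
    then show ?case using elim by simp
  qed
qed


lemma DeltaQ_nonneg: "0 \<le> N2 \<Longrightarrow> 0 \<le> Q \<Longrightarrow> 0 \<le> DeltaQ P1 Q N2"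
  unfolding DeltaQ_def by simp

lemma up_le:
  fixes P1 P2 Q N3 N2 r v :: real
  assumes "P1 > 0" "P2 > 0" "Q > 0" "N3 > 0" "N2 > 0" "(r, v) \<in> Rup_dom"
  shows "Rup_obj P1 P2 Q N2 N3 r v \<le> (1/2) * log 2 (1 + ((sqrt P1 + sqrt P2)^2 + DeltaQ P1 Q N2) / N3)"
proof -
  define \<Delta> where "\<Delta> = DeltaQ P1 Q N2"
  have D0: "0 \<le> \<Delta>" unfolding \<Delta>_def using assms by (simp add: DeltaQ_nonneg)
  have dom: "0 \<le> r" "r \<le> 1" "-1 \<le> v" "v \<le> 0" "r^2 + v^2 \<le> 1" using assms(6) by (auto simp: Rup_dom_def)
  define A where "A = (sqrt P2 + r * sqrt P1)^2"
  define C where "C = P1 * (1 - r^2 - v^2)"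
  define E where "E = (sqrt \<Delta> + v * sqrt P1)^2"
  define B where "B = C + E + N3"
  define S where "S = (sqrt P1 + sqrt P2)^2"
  have C0: "0 \<le> C" unfolding C_def using dom assms by simp
  have E0: "0 \<le> E" unfolding E_def by simp
  have A0: "0 \<le> A" unfolding A_def by simp
  have B0: "0 < B" unfolding B_def using C0 E0 assms by simp
  have s1: "sqrt \<Delta> * sqrt \<Delta> = \<Delta>" using D0 by simp
  have s2: "sqrt P1 * sqrt P1 = P1" using assms by simp
  have s3: "sqrt P2 * sqrt P2 = P2" using assms by simp
  have BA: "B + A = P1 + \<Delta> + 2 * v * (sqrt \<Delta> * sqrt P1) + N3 + P2 + 2 * r * (sqrt P1 * sqrt P2)"
    unfolding B_def A_def C_def E_def using D0 assms
    by (simp add: power2_eq_square algebra_simps s1 s2 s3)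
  have Sx: "S = P1 + P2 + 2 * (sqrt P1 * sqrt P2)"
    unfolding S_def using assms by (simp add: power2_eq_square algebra_simps s2 s3)
  have t1: "v * (sqrt \<Delta> * sqrt P1) \<le> 0" by (rule mult_nonpos_nonneg) (use dom D0 assms in auto)
  have t2: "r * (sqrt P1 * sqrt P2) \<le> sqrt P1 * sqrt P2" by (rule mult_left_le_one_le) (use dom assms in auto)
  have BA2: "B + A \<le> N3 + S + \<Delta>" using BA Sx t1 t2 by linarith
  have eq1: "(1 + A / B) * (1 + C / N3) = (B + A) * (N3 + C) / (B * N3)"
    using B0 assms by (simp add: field_simps)
  have "(B + A) * (N3 + C) \<le> (B + A) * B"
    by (rule mult_left_mono) (use B0 A0 E0 in \<open>auto simp: B_def\<close>)
  then have "(B + A) * (N3 + C) / (B * N3) \<le> (B + A) * B / (B * N3)"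
    by (rule divide_right_mono) (use B0 assms in auto)
  also have "\<dots> = (B + A) / N3" using B0 by simp
  also have "\<dots> \<le> (N3 + S + \<Delta>) / N3" using BA2 assms by (simp add: divide_right_mono)
  also have "\<dots> = 1 + (S + \<Delta>) / N3" using assms by (simp add: field_simps)
  finally have key: "(1 + A / B) * (1 + C / N3) \<le> 1 + (S + \<Delta>) / N3" using eq1 by simp
  have pA: "0 < 1 + A / B" using A0 B0 by (simp add: add_pos_nonneg)
  have pC: "0 < 1 + C / N3" using C0 assms by (simp add: add_pos_nonneg)
  have "(1/2) * log 2 (1 + A / B) + (1/2) * log 2 (1 + C / N3)
       = (1/2) * log 2 ((1 + A / B) * (1 + C / N3))"
    using log_mult_pos[OF pA pC, of 2] by (simp add: distrib_left)
  also have "\<dots> \<le> (1/2) * log 2 (1 + (S + \<Delta>) / N3)"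
    using log_mono[OF _ mult_pos_pos[OF pA pC] key] by simp
  finally have sec: "(1/2) * log 2 (1 + A / B) + (1/2) * log 2 (1 + C / N3) \<le> (1/2) * log 2 (1 + (S + \<Delta>) / N3)" .
  have "Rup_obj P1 P2 Q N2 N3 r v \<le> (1/2) * log 2 (1 + A / B) + (1/2) * log 2 (1 + C / N3)"
    unfolding Rup_obj_def A_def B_def C_def E_def \<Delta>_def by (rule min.cobounded2)
  then show ?thesis using sec unfolding S_def \<Delta>_def by simp
qed



lemma up_lim:
  fixes P1 P2 Q N3 :: real
  assumes "P1 > 0" "P2 > 0" "Q > 0" "N3 > 0"
  shows "((\<lambda>N2. RupG P1 P2 Q N3 N2) \<longlongrightarrow> (1/2) * log 2 (1 + (sqrt P1 + sqrt P2)^2 / N3)) (at_right 0)"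
proof (rule order_tendstoI)
  let ?L = "(1/2) * log 2 (1 + (sqrt P1 + sqrt P2)^2 / N3)"
  let ?U = "\<lambda>N2. (1/2) * log 2 (1 + ((sqrt P1 + sqrt P2)^2 + DeltaQ P1 Q N2) / N3)"
  have le: "RupG P1 P2 Q N3 N2 \<le> ?U N2" if "N2 > 0" for N2
    unfolding RupG_def
  proof (rule cSUP_least)
    have "(0,0) \<in> Rup_dom" unfolding Rup_dom_def by auto
    then show "Rup_dom \<noteq> {}" by blast
    fix x assume "x \<in> Rup_dom"
    then show "Rup_obj P1 P2 Q N2 N3 (fst x) (snd x) \<le> ?U N2"
      using up_le[OF assms that, of "fst x" "snd x"] by simp
  qed
  have dq: "((\<lambda>N2. DeltaQ P1 Q N2) \<longlongrightarrow> 0) (at_right 0)"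
  proof -
    have "0 < sqrt Q + sqrt P1" using assms by (simp add: add_pos_pos)
    then have p: "(sqrt Q + sqrt P1)^2 + 0 \<noteq> 0" by simp
    have "((\<lambda>N2. Q * N2 / ((sqrt Q + sqrt P1)^2 + N2)) \<longlongrightarrow> Q * 0 / ((sqrt Q + sqrt P1)^2 + 0)) (at_right 0)"
      by (intro tendsto_intros p)
    then show ?thesis unfolding DeltaQ_def by simp
  qed
  have pos: "0 < 1 + (sqrt P1 + sqrt P2)^2 / N3" using assms by (simp add: add_pos_nonneg)
  have "(?U \<longlongrightarrow> (1/2) * log 2 (1 + ((sqrt P1 + sqrt P2)^2 + 0) / N3)) (at_right 0)"
    using pos assms by (intro tendsto_intros dq) auto
  then have Ut: "(?U \<longlongrightarrow> ?L) (at_right 0)" by simp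
  fix a assume aL: "a > ?L"
  have "eventually (\<lambda>N2. ?U N2 < a) (at_right 0)" using Ut aL order_tendstoD(2) by blast
  then show "eventually (\<lambda>N2. RupG P1 P2 Q N3 N2 < a) (at_right 0)"
    using eventually_at_right_less[of "0::real"]
    by eventually_elim (use le in force)
next
  let ?L = "(1/2) * log 2 (1 + (sqrt P1 + sqrt P2)^2 / N3)"
  let ?U = "\<lambda>N2. (1/2) * log 2 (1 + ((sqrt P1 + sqrt P2)^2 + DeltaQ P1 Q N2) / N3)"
  fix a assume a: "a < ?L"
  define m where "m = (\<lambda>r. (1/2) * log 2 (1 + (sqrt P2 + r * sqrt P1)^2 / (P1 * (1 - r^2) + N3))
                        + (1/2) * log 2 (1 + P1 * (1 - r^2) / N3))"
  have m1: "m 1 = ?L" unfolding m_def by (simp add: add.commute)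
  have pos: "0 < 1 + (sqrt P2 + 1 * sqrt P1)^2 / (P1 * (1 - 1^2) + N3)" using assms by (simp add: add_pos_nonneg)
  have "(m \<longlongrightarrow> m 1) (at_left 1)"
    unfolding m_def using assms pos by (intro tendsto_intros) auto
  then have "eventually (\<lambda>r. a < m r) (at_left 1)" using a m1 order_tendstoD(1) by metis
  then obtain b where b: "b < 1" "\<And>y. b < y \<Longrightarrow> y < 1 \<Longrightarrow> a < m y"
    by (auto simp: eventually_at_left_field)
  define r where "r = max ((b + 1) / 2) (1/2)"
  have rb: "b < r" "r < 1" "0 \<le> r" using b(1) unfolding r_def by (auto simp: less_max_iff_disj max_def)
  have r: "0 \<le> r" "r < 1" "a < m r" using rb b(2) by auto
  have r2: "r^2 < 1" using r by (simp add: abs_square_less_1)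
  define K where "K = P1 * (1 - r^2)"
  have K: "K > 0" unfolding K_def using r2 assms by simp
  let ?sec = "\<lambda>N2. (1/2) * log 2 (1 + (sqrt P2 + r * sqrt P1)^2 /
              (P1 * (1 - r^2 - 0^2) + (sqrt (DeltaQ P1 Q N2) + 0 * sqrt P1)^2 + N3))
          + (1/2) * log 2 (1 + P1 * (1 - r^2 - 0^2) / N3)"
  have dq: "((\<lambda>N2. DeltaQ P1 Q N2) \<longlongrightarrow> 0) (at_right 0)"
  proof -
    have "0 < sqrt Q + sqrt P1" using assms by (simp add: add_pos_pos)
    then have p: "(sqrt Q + sqrt P1)^2 + 0 \<noteq> 0" by simp
    have "((\<lambda>N2. Q * N2 / ((sqrt Q + sqrt P1)^2 + N2)) \<longlongrightarrow> Q * 0 / ((sqrt Q + sqrt P1)^2 + 0)) (at_right 0)"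
      by (intro tendsto_intros p)
    then show ?thesis unfolding DeltaQ_def by simp
  qed
  have d1: "0 < P1 * (1 - r^2) + N3" using K assms unfolding K_def by simp
  have d2: "0 < 1 + (sqrt P2 + r * sqrt P1)^2 / (P1 * (1 - r^2) + N3)" using d1 by (simp add: add_pos_nonneg)
  have d3: "0 < 1 + P1 * (1 - r^2) / N3" using K assms unfolding K_def by (simp add: add_pos_nonneg)
  have "(?sec \<longlongrightarrow> (1/2) * log 2 (1 + (sqrt P2 + r * sqrt P1)^2 /
              (P1 * (1 - r^2 - 0^2) + (sqrt 0 + 0 * sqrt P1)^2 + N3))
          + (1/2) * log 2 (1 + P1 * (1 - r^2 - 0^2) / N3)) (at_right 0)"
    using d1 d2 d3 by (intro tendsto_intros dq) auto
  then have "(?sec \<longlongrightarrow> m r) (at_right 0)" unfolding m_def by simp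
  then have ev2: "eventually (\<lambda>N2. a < ?sec N2) (at_right 0)" using r(3) order_tendstoD(1) by blast
  define t where "t = K / 2 powr (2 * a)"
  have t: "t > 0" unfolding t_def using K by simp
  have ev1: "eventually (\<lambda>N2. a < (1/2) * log 2 (1 + P1 * (1 - r^2) * (1/N2 + 1/N3))) (at_right 0)"
    using eventually_at_right_real[OF t]
  proof eventually_elim
    case (elim N2)
    then have n: "0 < N2" "N2 < t" by auto
    have "2 powr (2 * a) * N2 < K" using n t unfolding t_def by (simp add: field_simps)
    then have "2 powr (2 * a) < K / N2" using n by (simp add: field_simps)
    also have "\<dots> < 1 + K * (1/N2 + 1/N3)" using K assms n by (simp add: field_simps add_pos_pos)
    finally have "2 * a < log 2 (1 + K * (1/N2 + 1/N3))"
      using K assms n by (subst less_log_iff) (auto intro!: add_pos_pos mult_pos_pos)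
    then show ?case unfolding K_def by simp
  qed
  show "eventually (\<lambda>N2. a < RupG P1 P2 Q N3 N2) (at_right 0)"
    using ev1 ev2 eventually_at_right_less[of "0::real"]
  proof eventually_elim
    case (elim N2)
    have "a < Rup_obj P1 P2 Q N2 N3 r 0" unfolding Rup_obj_def using elim by simp
    also have "Rup_obj P1 P2 Q N2 N3 r 0 \<le> RupG P1 P2 Q N3 N2"
      unfolding RupG_def
    proof -
      have mem: "(r, 0) \<in> Rup_dom" using r r2 unfolding Rup_dom_def by auto
      have "bdd_above ((\<lambda>rv. Rup_obj P1 P2 Q N2 N3 (fst rv) (snd rv)) ` Rup_dom)"
        by (rule bdd_aboveI2[where M = "?U N2"]) (use up_le assms elim in auto)
      from cSUP_upper[OF mem this] show "Rup_obj P1 P2 Q N2 N3 r 0 \<le> (SUP rv\<in>Rup_dom. Rup_obj P1 P2 Q N2 N3 (fst rv) (snd rv))" by simp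
    qed
    finally show ?case .
  qed
qed


theorem mainTheorem7:
  fixes P1 P2 Q N3 :: real
  assumes "P1 > 0" and "P2 > 0" and "Q > 0" and "N3 > 0"
  shows "((\<lambda>N2. RupG P1 P2 Q N3 N2) \<longlongrightarrow>
            (1/2) * log 2 (1 + (sqrt P1 + sqrt P2)^2 / N3)) (at_right 0)
       \<and> ((\<lambda>N2. RloG P1 P2 N3 N2) \<longlongrightarrow>
            (1/2) * log 2 (1 + (sqrt P1 + sqrt P2)^2 / N3)) (at_right 0)
       \<and> (\<forall>C :: real \<Rightarrow> real.
           (\<forall>N2>0. RloG P1 P2 N3 N2 \<le> C N2 \<and> C N2 \<le> RupG P1 P2 Q N3 N2) \<longrightarrow>
           (C \<longlongrightarrow> (1/2) * log 2 (1 + (sqrt P1 + sqrt P2)^2 / N3)) (at_right 0))"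
proof -
  have U: "((\<lambda>N2. RupG P1 P2 Q N3 N2) \<longlongrightarrow> (1/2) * log 2 (1 + (sqrt P1 + sqrt P2)^2 / N3)) (at_right 0)"
    using up_lim assms by blast
  have Lo: "((\<lambda>N2. RloG P1 P2 N3 N2) \<longlongrightarrow> (1/2) * log 2 (1 + (sqrt P1 + sqrt P2)^2 / N3)) (at_right 0)"
    using lo_lim assms by blast
  have "(C \<longlongrightarrow> (1/2) * log 2 (1 + (sqrt P1 + sqrt P2)^2 / N3)) (at_right 0)"
    if h: "\<forall>N2>0. RloG P1 P2 N3 N2 \<le> C N2 \<and> C N2 \<le> RupG P1 P2 Q N3 N2" for C :: "real \<Rightarrow> real"
  proof (rule tendsto_sandwich[OF _ _ Lo U])
    show "eventually (\<lambda>N2. RloG P1 P2 N3 N2 \<le> C N2) (at_right 0)"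
      by (rule eventually_mono[OF eventually_at_right_less]) (use h in auto)
    show "eventually (\<lambda>N2. C N2 \<le> RupG P1 P2 Q N3 N2) (at_right 0)"
      by (rule eventually_mono[OF eventually_at_right_less]) (use h in auto)
  qed
  then show ?thesis using U Lo by blast
qed

end
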